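(* Let $\mathbf{x}_k\in\mathbb{R}^d$ and $\sigma_k>0$, and let $\epsilon>0$. Suppose the sampled estimates $\mathbf{g}_k,\mathbf{B}_k,\mathbf{T}_k$ at $\mathbf{x}_k$ satisfy the sampling condition with accuracy $\epsilon$ and constants $\kappa_g=\frac14,\kappa_b=\frac14,\kappa_t=\frac12$, and set $\epsilon_1:=\epsilon$. Let $\mathbf{s}_k$ satisfy the approximate minimization condition with constant $\theta>0$. Then $$\|\mathbf{s}_k\|\ge\kappa_k^{-1/3}\left(\chi_{f,1}(\mathbf{x}_k+\mathbf{s}_k)-\tfrac12\epsilon_1\right)^{1/3},\qquad\kappa_k=\sigma_k+\frac{L_t}{2}+\theta+\frac14,$$ where $(\cdot)^{1/3}$ is the real cube root.
   Context: $f(\mathbf{x})=\frac1n\sum_{i=1}^n f_i(\mathbf{x})$, each $f_i\in C^3(\mathbb{R}^d,\mathbb{R})$ with $f_i,\nabla f_i,\nabla^2 f_i,\nabla^3 f_i$ Lipschitz with constants $L_f,L_g,L_b,L_t$ (Euclidean norm on vectors; on $p$-th order tensors $\|A\|_{[p]}=\max_{\|\mathbf{h}_1\|=\dots=\|\mathbf{h}_p\|=1}|A[\mathbf{h}_1,\dots,\mathbf{h}_p]|$). For a third-order tensor $T$: $T[\mathbf{s}]^2=(\sum_{j,k}T_{ijk}s_js_k)_i$, $T[\mathbf{s}]^3=\sum_{i,j,k}T_{ijk}s_is_js_k$. Sampled estimates: $\mathbf{g}_k=\frac{1}{|\mathcal{S}^g|}\sum_{i\in\mathcal{S}^g}\nabla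 f_i(\mathbf{x}_k)$, $\mathbf{B}_k=\frac{1}{|\mathcal{S}^b|}\sum_{i\in\mathcal{S}^b}\nabla^2 f_i(\mathbf{x}_k)$, $\mathbf{T}_k=\frac{1}{|\mathcal{S}^t|}\sum_{i\in\mathcal{S}^t}\nabla^3 f_i(\mathbf{x}_k)$ for index sets $\mathcal{S}^g,\mathcal{S}^b,\mathcal{S}^t\subseteq\{1,\dots,n\}$. Model: $\phi_k(\mathbf{s})=f(\mathbf{x}_k)+\mathbf{g}_k^\top\mathbf{s}+\frac12\mathbf{s}^\top\mathbf{B}_k\mathbf{s}+\frac16\mathbf{T}_k[\mathbf{s}]^3$, $m_k(\mathbf{s})=\phi_k(\mathbf{s})+\frac{\sigma_k}{4}\|\mathbf{s}\|^4$. Sampling condition (accuracy $\epsilon$, constants $\kappa_g,\kappa_b,\kappa_t$): $\|\mathbf{g}_k-\nabla f(\mathbf{x}_k)\|\le\kappa_g\epsilon$; $\|(\mathbf{B}_k-\nabla^2 f(\mathbf{x}_k))\mathbf{s}\|\le\kappa_b\epsilon^{2/3}\|\mathbf{s}\|$ and $\|\mathbf{T}_k[\mathbf{s}]^2-\nabla^3 f(\mathbf{x}_k)[\mathbf{s}]^2\|\le\kappa_t\epsilon^{1/3}\|\mathbf{s}\|^2$ for all $\mathbf{s}\in\mathbb{R}^d$. Approximate minimization condition (constants $\theta>0,\zeta>0$): $m_k(\mathbf{s}_k)<m_k(\mathbf{0})$ and $\chi_{m,i}(\mathbf{x}_k,\mathbf{s}_k)\le\theta\|\mathbf{s}_k\|^{4-i}$,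 $i=1,2,3$, with $\chi_{m,1}=\|\nabla m_k(\mathbf{s})\|$, $\chi_{m,2}=\max(0,-\lambda_{min}(\nabla^2 m_k(\mathbf{s})))$, $\chi_{m,3}=\max\{|\nabla^3 m_k(\mathbf{s})[\mathbf{y}]^3|:\|\mathbf{y}\|=1,|\mathbf{y}^\top\nabla^2 m_k(\mathbf{s})\mathbf{y}|\le\zeta\}$ (empty maximum $=0$). Criticality: $\chi_{f,1}(\mathbf{x})=\|\nabla f(\mathbf{x})\|$. *)

theory Defs
  imports "HOL-Analysis.Analysis"
begin

text \<open>Third-order tensors are elements of real^'d^'d^'d, entry T_{ijk} = T $ i $ j $ k.
  Hessians are real^'d^'d. Vectors are real^'d with the Euclidean norm.\<close>

definition tsq :: "real^'d^'d^'d \<Rightarrow> real^'d \<Rightarrow> real^'d" where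
  "tsq T s = (\<chi> i. \<Sum>j\<in>UNIV. \<Sum>k\<in>UNIV. T $ i $ j $ k * s $ j * s $ k)"

definition tcube :: "real^'d^'d^'d \<Rightarrow> real^'d \<Rightarrow> real" where
  "tcube T s = (\<Sum>i\<in>UNIV. \<Sum>j\<in>UNIV. \<Sum>k\<in>UNIV. T $ i $ j $ k * s $ i * s $ j * s $ k)"

text \<open>Contraction of a third-order tensor in its last slot (directional derivative of a Hessian).\<close>
definition tdir :: "real^'d^'d^'d \<Rightarrow> real^'d \<Rightarrow> real^'d^'d" where
  "tdir T h = (\<chi> i j. \<Sum>k\<in>UNIV. T $ i $ j $ k * h $ k)"

definition tnorm2 :: "real^'d^'d \<Rightarrow> real" where
  "tnorm2 A = Sup {\<bar>h1 \<bullet> (A *v h2)\<bar> | h1 h2. norm h1 = 1 \<and> norm h2 = 1}"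

definition tnorm3 :: "real^'d^'d^'d \<Rightarrow> real" where
  "tnorm3 T = Sup {\<bar>\<Sum>i\<in>UNIV. \<Sum>j\<in>UNIV. \<Sum>k\<in>UNIV. T $ i $ j $ k * h1 $ i * h2 $ j * h3 $ k\<bar>
                  | h1 h2 h3. norm h1 = 1 \<and> norm h2 = 1 \<and> norm h3 = 1}"

definition avg :: "nat \<Rightarrow> (nat \<Rightarrow> 'a::real_vector) \<Rightarrow> 'a" where
  "avg n F = (1 / real n) *\<^sub>R (\<Sum>i\<in>{1..n}. F i)"

definition sample_avg :: "nat set \<Rightarrow> (nat \<Rightarrow> 'a::real_vector) \<Rightarrow> 'a" where
  "sample_avg S F = (1 / real (card S)) *\<^sub>R (\<Sum>i\<in>S. F i)"

definition model_phi :: "real \<Rightarrow> real^'d \<Rightarrow> real^'d^'d \<Rightarrow> real^'d^'d^'d \<Rightarrow> real^'d \<Rightarrow> real" where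
  "model_phi fx g B T s = fx + g \<bullet> s + 1/2 * (s \<bullet> (B *v s)) + 1/6 * tcube T s"

definition model_m :: "real \<Rightarrow> real^'d \<Rightarrow> real^'d^'d \<Rightarrow> real^'d^'d^'d \<Rightarrow> real \<Rightarrow> real^'d \<Rightarrow> real" where
  "model_m fx g B T \<sigma> s = model_phi fx g B T s + \<sigma> / 4 * norm s ^ 4"

definition model_grad :: "real^'d \<Rightarrow> real^'d^'d \<Rightarrow> real^'d^'d^'d \<Rightarrow> real \<Rightarrow> real^'d \<Rightarrow> real^'d" where
  "model_grad g B T \<sigma> s = g + B *v s + (1/2) *\<^sub>R tsq T s + (\<sigma> * norm s ^ 2) *\<^sub>R s"

definition model_hess :: "real^'d^'d \<Rightarrow> real^'d^'d^'d \<Rightarrow> real \<Rightarrow> real^'d \<Rightarrow> real^'d^'d" where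
  "model_hess B T \<sigma> s = B + tdir T s
     + \<sigma> *\<^sub>R ((norm s ^ 2) *\<^sub>R mat 1 + 2 *\<^sub>R (\<chi> i j. s $ i * s $ j))"

definition model_third :: "real^'d^'d^'d \<Rightarrow> real \<Rightarrow> real^'d \<Rightarrow> real^'d^'d^'d" where
  "model_third T \<sigma> s = (\<chi> i j k. T $ i $ j $ k + 2 * \<sigma> *
      ((if i = j then s $ k else 0) + (if i = k then s $ j else 0) + (if j = k then s $ i else 0)))"

definition lambda_min :: "real^'d^'d \<Rightarrow> real" where
  "lambda_min M = Inf {c. \<exists>v. v \<noteq> 0 \<and> M *v v = c *\<^sub>R v}"

definition chi_m1 :: "real^'d \<Rightarrow> real^'d^'d \<Rightarrow> real^'d^'d^'d \<Rightarrow> real \<Rightarrow> real^'d \<Rightarrow> real" where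
  "chi_m1 g B T \<sigma> s = norm (model_grad g B T \<sigma> s)"

definition chi_m2 :: "real^'d^'d \<Rightarrow> real^'d^'d^'d \<Rightarrow> real \<Rightarrow> real^'d \<Rightarrow> real" where
  "chi_m2 B T \<sigma> s = max 0 (- lambda_min (model_hess B T \<sigma> s))"

definition chi_m3 :: "real \<Rightarrow> real^'d^'d \<Rightarrow> real^'d^'d^'d \<Rightarrow> real \<Rightarrow> real^'d \<Rightarrow> real" where
  "chi_m3 \<zeta> B T \<sigma> s =
     (let A = {\<bar>tcube (model_third T \<sigma> s) y\<bar> | y. norm y = 1 \<and>
                 \<bar>y \<bullet> (model_hess B T \<sigma> s *v y)\<bar> \<le> \<zeta>}
      in if A = {} then 0 else Sup A)"

text \<open>Sampling condition with accuracy eps and constants kg kb kt, comparing the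
  estimates (g, B, T) with the exact derivatives (G, H, TT) at the current iterate.\<close>
definition sampling_cond ::
  "real \<Rightarrow> real \<Rightarrow> real \<Rightarrow> real \<Rightarrow> real^'d \<Rightarrow> real^'d^'d \<Rightarrow> real^'d^'d^'d
     \<Rightarrow> real^'d \<Rightarrow> real^'d^'d \<Rightarrow> real^'d^'d^'d \<Rightarrow> bool" where
  "sampling_cond eps kg kb kt g B T G H TT \<longleftrightarrow>
     norm (g - G) \<le> kg * eps \<and>
     (\<forall>s. norm ((B - H) *v s) \<le> kb * eps powr (2/3) * norm s) \<and>
     (\<forall>s. norm (tsq T s - tsq TT s) \<le> kt * eps powr (1/3) * norm s ^ 2)"

definition approx_min_cond ::
  "real \<Rightarrow> real \<Rightarrow> real \<Rightarrow> real^'d \<Rightarrow> real^'d^'d \<Rightarrow> real^'d^'d^'d \<Rightarrow> real \<Rightarrow> real^'d \<Rightarrow> bool" where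
  "approx_min_cond \<theta> \<zeta> fx g B T \<sigma> s \<longleftrightarrow>
     model_m fx g B T \<sigma> s < model_m fx g B T \<sigma> 0 \<and>
     chi_m1 g B T \<sigma> s \<le> \<theta> * norm s ^ 3 \<and>
     chi_m2 B T \<sigma> s \<le> \<theta> * norm s ^ 2 \<and>
     chi_m3 \<zeta> B T \<sigma> s \<le> \<theta> * norm s"

end

theory Submission
  imports Defs
begin

definition trip :: "real^'d^'d^'d \<Rightarrow> real^'d \<Rightarrow> real^'d \<Rightarrow> real^'d \<Rightarrow> real" where
 "trip T a b c = (\<Sum>i\<in>UNIV. \<Sum>j\<in>UNIV. \<Sum>k\<in>UNIV. T$i$j$k * a$i * b$j * c$k)"

lemma trip_scale: "trip T (x *\<^sub>R a) (y *\<^sub>R b) (z *\<^sub>R c) = x*y*z * trip T a b c"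
  by (simp add: trip_def sum_distrib_left mult_ac)

lemma trip_diff: "trip (T - U) a b c = trip T a b c - trip U a b c"
  by (simp add: trip_def algebra_simps sum_subtractf)

lemma trip_unit_bound:
  assumes "norm a = 1" "norm b = 1" "norm c = 1"
  shows "\<bar>trip T a b c\<bar> \<le> (\<Sum>i\<in>UNIV. \<Sum>j\<in>UNIV. \<Sum>k\<in>UNIV. \<bar>T$i$j$k\<bar>)"
proof -
  have t: "\<bar>T$i$j$k * a$i * b$j * c$k\<bar> \<le> \<bar>T$i$j$k\<bar>" for i j k
  proof -
    have "\<bar>a$i\<bar> \<le> 1" "\<bar>b$j\<bar> \<le> 1" "\<bar>c$k\<bar> \<le> 1"
      using component_le_norm_cart[of a i] component_le_norm_cart[of b j] component_le_norm_cart[of c k] assms by auto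
    hence "\<bar>a$i\<bar> * \<bar>b$j\<bar> * \<bar>c$k\<bar> \<le> 1"
      by (metis abs_ge_zero mult_le_one)
    hence "\<bar>T$i$j$k\<bar> * (\<bar>a$i\<bar> * \<bar>b$j\<bar> * \<bar>c$k\<bar>) \<le> \<bar>T$i$j$k\<bar>"
      by (simp add: mult_left_le)
    thus ?thesis by (simp add: abs_mult mult_ac)
  qed
  have "\<bar>trip T a b c\<bar> \<le> (\<Sum>i\<in>UNIV. \<bar>\<Sum>j\<in>UNIV. \<Sum>k\<in>UNIV. T$i$j$k * a$i * b$j * c$k\<bar>)"
    unfolding trip_def by (rule sum_abs)
  also have "\<dots> \<le> (\<Sum>i\<in>UNIV. \<Sum>j\<in>UNIV. \<bar>\<Sum>k\<in>UNIV. T$i$j$k * a$i * b$j * c$k\<bar>)"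
    by (intro sum_mono sum_abs)
  also have "\<dots> \<le> (\<Sum>i\<in>UNIV. \<Sum>j\<in>UNIV. \<Sum>k\<in>UNIV. \<bar>T$i$j$k * a$i * b$j * c$k\<bar>)"
    by (intro sum_mono sum_abs)
  also have "\<dots> \<le> (\<Sum>i\<in>UNIV. \<Sum>j\<in>UNIV. \<Sum>k\<in>UNIV. \<bar>T$i$j$k\<bar>)"
    by (intro sum_mono t)
  finally show ?thesis .
qed

lemma trip_le_tnorm3:
  assumes "norm a = 1" "norm b = 1" "norm c = 1"
  shows "\<bar>trip T a b c\<bar> \<le> tnorm3 T"
  unfolding tnorm3_def
proof (rule cSup_upper)
  show "\<bar>trip T a b c\<bar> \<in> {\<bar>\<Sum>i\<in>UNIV. \<Sum>j\<in>UNIV. \<Sum>k\<in>UNIV. T $ i $ j $ k * h1 $ i * h2 $ j * h3 $ k\<bar>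
                  | h1 h2 h3. norm h1 = 1 \<and> norm h2 = 1 \<and> norm h3 = 1}"
    using assms unfolding trip_def by blast
  show "bdd_above {\<bar>\<Sum>i\<in>UNIV. \<Sum>j\<in>UNIV. \<Sum>k\<in>UNIV. T $ i $ j $ k * h1 $ i * h2 $ j * h3 $ k\<bar>
                  | h1 h2 h3. norm h1 = 1 \<and> norm h2 = 1 \<and> norm h3 = 1}"
    unfolding bdd_above_def using trip_unit_bound[of _ _ _ T] unfolding trip_def by blast
qed

lemma trip_bound: "\<bar>trip T a b c\<bar> \<le> tnorm3 T * norm a * norm b * norm c"
proof (cases "a = 0 \<or> b = 0 \<or> c = 0")
  case True
  hence "trip T a b c = 0" unfolding trip_def by auto
  thus ?thesis using True by auto
next
  case False
  hence p: "norm a > 0" "norm b > 0" "norm c > 0" by auto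
  let ?a = "(1/norm a) *\<^sub>R a" and ?b = "(1/norm b) *\<^sub>R b" and ?c = "(1/norm c) *\<^sub>R c"
  have "trip T a b c = norm a * norm b * norm c * trip T ?a ?b ?c"
    using p by (simp add: trip_scale)
  moreover have "\<bar>trip T ?a ?b ?c\<bar> \<le> tnorm3 T"
    using p by (intro trip_le_tnorm3) auto
  ultimately show ?thesis using p
    by (simp add: abs_mult mult_ac mult_left_mono)
qed

lemma inner_tsq: "w \<bullet> tsq T s = trip T w s s"
  by (simp add: inner_vec_def tsq_def trip_def sum_distrib_left mult_ac)

lemma inner_tdir: "w \<bullet> (tdir T (h *\<^sub>R s) *v s) = h * trip T w s s"
  by (simp add: inner_vec_def tdir_def trip_def matrix_vector_mult_def sum_distrib_left mult_ac sum_distrib_right)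

lemma inner_avg: fixes F :: "nat \<Rightarrow> real^'d" shows "w \<bullet> avg n F = (1 / real n) * (\<Sum>i\<in>{1..n}. w \<bullet> F i)"
  by (simp add: avg_def inner_sum_right)

lemma avg_mv: fixes F :: "nat \<Rightarrow> real^'d^'d" shows "avg n F *v s = avg n (\<lambda>i. F i *v s)"
  apply (simp add: avg_def vec_eq_iff matrix_vector_mult_def sum_component)
  apply (simp add: sum_distrib_left sum_distrib_right algebra_simps real_scaleR_def)
  apply (simp add: sum_divide_distrib[symmetric])
  apply (rule disjI2, rule allI, rule sum.swap)
  done

lemma tsq_avg: "tsq (avg n T) s = avg n (\<lambda>i. tsq (T i) s)"
  apply (simp add: avg_def vec_eq_iff tsq_def sum_distrib_left sum_distrib_right sum_divide_distrib mult_ac)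
  apply (rule allI)
  apply (rule trans[OF sum.cong[OF refl sum.swap]])
  apply (rule sum.swap)
  done

lemma bl1: "bounded_linear (\<lambda>M::real^'d^'d. w \<bullet> (M *v s))"
  apply (rule linear_conv_bounded_linear[THEN iffD1])
  apply (rule linearI)
  apply (simp add: matrix_vector_mult_add_rdistrib inner_add_right)
  by (simp add: scaleR_matrix_vector_assoc[symmetric])

lemma line_deriv: "((\<lambda>t::real. x + t *\<^sub>R s) has_derivative (\<lambda>h. h *\<^sub>R s)) (at t)"
  by (auto intro!: derivative_eq_intros)

lemma deriv1:
  fixes G :: "real^'d \<Rightarrow> real^'d" and H :: "real^'d \<Rightarrow> real^'d^'d"
  assumes "\<forall>y. (G has_derivative (\<lambda>h. H y *v h)) (at y)"
  shows "((\<lambda>t. w \<bullet> G (x + t *\<^sub>R s)) has_real_derivative (w \<bullet> (H (x + t *\<^sub>R s) *v s))) (at t)"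
proof -
  have "((\<lambda>t. G (x + t *\<^sub>R s)) has_derivative (\<lambda>h. H (x + t *\<^sub>R s) *v (h *\<^sub>R s))) (at t)"
    using has_derivative_compose[OF line_deriv assms[rule_format]] .
  then have "((\<lambda>t. w \<bullet> G (x + t *\<^sub>R s)) has_derivative (\<lambda>h. w \<bullet> (H (x + t *\<^sub>R s) *v (h *\<^sub>R s)))) (at t)"
    by (rule bounded_linear.has_derivative[OF bounded_linear_inner_right])
  moreover have "(\<lambda>h. w \<bullet> (H (x + t *\<^sub>R s) *v (h *\<^sub>R s))) = (\<lambda>h. (w \<bullet> (H (x + t *\<^sub>R s) *v s)) * h)"
    by (auto simp: matrix_vector_mult_scaleR)
  ultimately show ?thesis by (simp add: has_field_derivative_def)
qed

lemma deriv2: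
  fixes H :: "real^'d \<Rightarrow> real^'d^'d" and T :: "real^'d \<Rightarrow> real^'d^'d^'d"
  assumes "\<forall>y. (H has_derivative (\<lambda>h. tdir (T y) h)) (at y)"
  shows "((\<lambda>t. w \<bullet> (H (x + t *\<^sub>R s) *v s)) has_real_derivative trip (T (x + t *\<^sub>R s)) w s s) (at t)"
proof -
  have "((\<lambda>t. H (x + t *\<^sub>R s)) has_derivative (\<lambda>h. tdir (T (x + t *\<^sub>R s)) (h *\<^sub>R s))) (at t)"
    using has_derivative_compose[OF line_deriv assms[rule_format]] .
  then have "((\<lambda>t. w \<bullet> (H (x + t *\<^sub>R s) *v s)) has_derivative (\<lambda>h. w \<bullet> (tdir (T (x + t *\<^sub>R s)) (h *\<^sub>R s) *v s))) (at t)"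
    by (rule bounded_linear.has_derivative[OF bl1])
  moreover have "(\<lambda>h. w \<bullet> (tdir (T (x + t *\<^sub>R s)) (h *\<^sub>R s) *v s)) = (\<lambda>h. trip (T (x + t *\<^sub>R s)) w s s * h)"
    by (auto simp: inner_tdir)
  ultimately show ?thesis by (simp add: has_field_derivative_def)
qed

lemma taylor_bound:
  fixes gf :: "nat \<Rightarrow> real^'d \<Rightarrow> real^'d"
    and hf :: "nat \<Rightarrow> real^'d \<Rightarrow> real^'d^'d"
    and tf :: "nat \<Rightarrow> real^'d \<Rightarrow> real^'d^'d^'d"
  assumes n: "n \<ge> 1"
    and d2: "\<forall>i\<in>{1..n}. \<forall>x. (gf i has_derivative (\<lambda>h. hf i x *v h)) (at x)"
    and d3: "\<forall>i\<in>{1..n}. \<forall>x. (hf i has_derivative (\<lambda>h. tdir (tf i x) h)) (at x)"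
    and Lip_t: "\<forall>i\<in>{1..n}. \<forall>x y. tnorm3 (tf i x - tf i y) \<le> Lt * norm (x - y)"
    and Lt: "Lt \<ge> 0"
  shows "\<bar>w \<bullet> (avg n (\<lambda>i. gf i (x + s)) - avg n (\<lambda>i. gf i x) - avg n (\<lambda>i. hf i x) *v s
            - (1/2) *\<^sub>R tsq (avg n (\<lambda>i. tf i x)) s)\<bar> \<le> norm w * (Lt / 2 * norm s ^ 3)"
proof -
  define p0 where "p0 t = (1 / real n) * (\<Sum>i\<in>{1..n}. w \<bullet> gf i (x + t *\<^sub>R s))" for t
  define p1 where "p1 t = (1 / real n) * (\<Sum>i\<in>{1..n}. w \<bullet> (hf i (x + t *\<^sub>R s) *v s))" for t
  define p2 where "p2 t = (1 / real n) * (\<Sum>i\<in>{1..n}. trip (tf i (x + t *\<^sub>R s)) w s s)" for t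
  have D0: "(p0 has_real_derivative p1 t) (at t)" for t
    unfolding p0_def p1_def
    by (intro DERIV_cmult DERIV_sum deriv1) (use d2 in auto)
  have D1: "(p1 has_real_derivative p2 t) (at t)" for t
    unfolding p1_def p2_def
    by (intro DERIV_cmult DERIV_sum deriv2) (use d3 in auto)
  define df where "df m = (if m = 0 then p0 else if m = 1 then p1 else p2)" for m :: nat
  obtain t0 where t0: "0 < t0" "t0 < 1"
    and eq: "p0 1 = (\<Sum>m<2. df m 0 / fact m * 1 ^ m) + df 2 t0 / fact 2 * 1 ^ 2"
  proof -
    have "\<forall>m t. m < 2 \<and> 0 \<le> t \<and> t \<le> 1 \<longrightarrow> (df m has_real_derivative df (Suc m) t) (at t)"
    proof (intro allI impI)
      fix m :: nat and t :: real assume "m < 2 \<and> 0 \<le> t \<and> t \<le> 1"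
      hence "m = 0 \<or> m = 1" by auto
      thus "(df m has_real_derivative df (Suc m) t) (at t)"
        using D0 D1 unfolding df_def by auto
    qed
    moreover have "df 0 = p0" unfolding df_def by simp
    ultimately show ?thesis using Maclaurin[of 1 2 df p0] that by auto
  qed
  have eq2: "p0 1 = p0 0 + p1 0 + p2 t0 / 2"
    using eq by (simp add: df_def numeral_2_eq_2)
  have lhs: "w \<bullet> (avg n (\<lambda>i. gf i (x + s)) - avg n (\<lambda>i. gf i x) - avg n (\<lambda>i. hf i x) *v s
            - (1/2) *\<^sub>R tsq (avg n (\<lambda>i. tf i x)) s) = p0 1 - p0 0 - p1 0 - p2 0 / 2"
    unfolding p0_def p1_def p2_def
    by (simp add: inner_diff_right inner_avg avg_mv tsq_avg inner_tsq)
  have "p2 t0 - p2 0 = (1 / real n) * (\<Sum>i\<in>{1..n}. trip (tf i (x + t0 *\<^sub>R s) - tf i x) w s s)"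
    unfolding p2_def by (simp add: trip_diff sum_subtractf right_diff_distrib)
  moreover have "\<bar>\<Sum>i\<in>{1..n}. trip (tf i (x + t0 *\<^sub>R s) - tf i x) w s s\<bar> \<le> real n * (Lt * norm s * norm w * norm s * norm s)"
  proof -
    have "\<bar>\<Sum>i\<in>{1..n}. trip (tf i (x + t0 *\<^sub>R s) - tf i x) w s s\<bar>
        \<le> (\<Sum>i\<in>{1..n}. \<bar>trip (tf i (x + t0 *\<^sub>R s) - tf i x) w s s\<bar>)" by (rule sum_abs)
    also have "\<dots> \<le> (\<Sum>i\<in>{1..n}. Lt * norm s * norm w * norm s * norm s)"
    proof (rule sum_mono)
      fix i assume i: "i \<in> {1..n}"
      have a: "\<bar>trip (tf i (x + t0 *\<^sub>R s) - tf i x) w s s\<bar> \<le> tnorm3 (tf i (x + t0 *\<^sub>R s) - tf i x) * norm w * norm s * norm s"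
        by (rule trip_bound)
      have "tnorm3 (tf i (x + t0 *\<^sub>R s) - tf i x) \<le> Lt * norm (t0 *\<^sub>R s)"
        using Lip_t i by (metis add_diff_cancel_left')
      also have "\<dots> \<le> Lt * norm s" using t0 Lt by (intro mult_left_mono) (auto simp: mult_left_le_one_le)
      finally have b: "tnorm3 (tf i (x + t0 *\<^sub>R s) - tf i x) \<le> Lt * norm s" .
      have "tnorm3 (tf i (x + t0 *\<^sub>R s) - tf i x) * (norm w * norm s * norm s) \<le> Lt * norm s * (norm w * norm s * norm s)"
        using b by (intro mult_right_mono) auto
      thus "\<bar>trip (tf i (x + t0 *\<^sub>R s) - tf i x) w s s\<bar> \<le> Lt * norm s * norm w * norm s * norm s"
        using a by (simp add: mult_ac)
    qed
    also have "\<dots> = real n * (Lt * norm s * norm w * norm s * norm s)" by simp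
    finally show ?thesis .
  qed
  ultimately have "\<bar>p2 t0 - p2 0\<bar> \<le> Lt * norm s * norm w * norm s * norm s"
  proof -
    assume e: "p2 t0 - p2 0 = (1 / real n) * (\<Sum>i\<in>{1..n}. trip (tf i (x + t0 *\<^sub>R s) - tf i x) w s s)"
      and b: "\<bar>\<Sum>i\<in>{1..n}. trip (tf i (x + t0 *\<^sub>R s) - tf i x) w s s\<bar> \<le> real n * (Lt * norm s * norm w * norm s * norm s)"
    have np: "real n > 0" using n by simp
    have "\<bar>p2 t0 - p2 0\<bar> = \<bar>\<Sum>i\<in>{1..n}. trip (tf i (x + t0 *\<^sub>R s) - tf i x) w s s\<bar> / real n"
      unfolding e using np by (simp add: abs_mult)
    also have "\<dots> \<le> real n * (Lt * norm s * norm w * norm s * norm s) / real n"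
      using b np by (intro divide_right_mono) auto
    also have "\<dots> = Lt * norm s * norm w * norm s * norm s" using np by simp
    finally show ?thesis .
  qed
  moreover have hh: "p0 1 - p0 0 - p1 0 - p2 0 / 2 = (p2 t0 - p2 0) / 2" using eq2 by simp
  have "\<bar>p0 1 - p0 0 - p1 0 - p2 0 / 2\<bar> = \<bar>p2 t0 - p2 0\<bar> / 2"
    by (simp only: hh abs_divide)
  ultimately have "\<bar>p0 1 - p0 0 - p1 0 - p2 0 / 2\<bar> \<le> (Lt * norm s * norm w * norm s * norm s) / 2"
    by (metis divide_right_mono zero_le_numeral)
  thus ?thesis unfolding lhs by (simp add: power3_eq_cube mult_ac)
qed

theorem lemma2:
  fixes n :: nat
    and f :: "nat \<Rightarrow> real^'d \<Rightarrow> real"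
    and gf :: "nat \<Rightarrow> real^'d \<Rightarrow> real^'d"
    and hf :: "nat \<Rightarrow> real^'d \<Rightarrow> real^'d^'d"
    and tf :: "nat \<Rightarrow> real^'d \<Rightarrow> real^'d^'d^'d"
    and Lf Lg Lb Lt :: real
    and Sg Sb St :: "nat set"
    and xk sk :: "real^'d"
    and \<sigma> \<epsilon> \<theta> \<zeta> :: real
  assumes n: "n \<ge> 1"
    and d1: "\<forall>i\<in>{1..n}. \<forall>x. (f i has_derivative (\<lambda>h. gf i x \<bullet> h)) (at x)"
    and d2: "\<forall>i\<in>{1..n}. \<forall>x. (gf i has_derivative (\<lambda>h. hf i x *v h)) (at x)"
    and d3: "\<forall>i\<in>{1..n}. \<forall>x. (hf i has_derivative (\<lambda>h. tdir (tf i x) h)) (at x)"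
    and Lip_f: "\<forall>i\<in>{1..n}. \<forall>x y. \<bar>f i x - f i y\<bar> \<le> Lf * norm (x - y)"
    and Lip_g: "\<forall>i\<in>{1..n}. \<forall>x y. norm (gf i x - gf i y) \<le> Lg * norm (x - y)"
    and Lip_b: "\<forall>i\<in>{1..n}. \<forall>x y. tnorm2 (hf i x - hf i y) \<le> Lb * norm (x - y)"
    and Lip_t: "\<forall>i\<in>{1..n}. \<forall>x y. tnorm3 (tf i x - tf i y) \<le> Lt * norm (x - y)"
    and S: "Sg \<subseteq> {1..n}" "Sb \<subseteq> {1..n}" "St \<subseteq> {1..n}"
    and pos: "\<sigma> > 0" "\<epsilon> > 0" "\<theta> > 0" "\<zeta> > 0"
    and samp: "sampling_cond \<epsilon> (1/4) (1/4) (1/2)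
                 (sample_avg Sg (\<lambda>i. gf i xk)) (sample_avg Sb (\<lambda>i. hf i xk))
                 (sample_avg St (\<lambda>i. tf i xk))
                 (avg n (\<lambda>i. gf i xk)) (avg n (\<lambda>i. hf i xk)) (avg n (\<lambda>i. tf i xk))"
    and amin: "approx_min_cond \<theta> \<zeta> (avg n (\<lambda>i. f i xk))
                 (sample_avg Sg (\<lambda>i. gf i xk)) (sample_avg Sb (\<lambda>i. hf i xk))
                 (sample_avg St (\<lambda>i. tf i xk)) \<sigma> sk"
  shows "norm sk \<ge> (\<sigma> + Lt / 2 + \<theta> + 1/4) powr (-1/3)
                    * root 3 (norm (avg n (\<lambda>i. gf i (xk + sk))) - 1/2 * \<epsilon>)"
proof -
  define g where "g = sample_avg Sg (\<lambda>i. gf i xk)"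
  define B where "B = sample_avg Sb (\<lambda>i. hf i xk)"
  define T where "T = sample_avg St (\<lambda>i. tf i xk)"
  define G where "G = avg n (\<lambda>i. gf i xk)"
  define H where "H = avg n (\<lambda>i. hf i xk)"
  define TT where "TT = avg n (\<lambda>i. tf i xk)"
  define G1 where "G1 = avg n (\<lambda>i. gf i (xk + sk))"
  define a where "a = norm sk"
  have a0: "a \<ge> 0" unfolding a_def by simp
  have n1: "1 \<in> {1..n}" using n by simp
  have Lt0: "Lt \<ge> 0"
  proof -
    obtain k :: 'd where True by simp
    have nu: "norm (axis k (1::real)) = 1" by (simp add: norm_axis_1)
    have "\<bar>trip (tf 1 (axis k 1) - tf 1 0) (axis k 1) (axis k 1) (axis k 1)\<bar>
          \<le> tnorm3 (tf 1 (axis k 1) - tf 1 0) * 1 * 1 * 1"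
      using trip_bound[of "tf 1 (axis k 1) - tf 1 0" "axis k 1" "axis k 1" "axis k 1"] nu by simp
    moreover have "tnorm3 (tf 1 (axis k 1) - tf 1 0) \<le> Lt * norm (axis k (1::real) - 0)"
      using Lip_t n1 by blast
    ultimately show ?thesis using nu by simp
  qed
  define r where "r = G1 - G - H *v sk - (1/2) *\<^sub>R tsq TT sk"
  have rb: "norm r \<le> Lt / 2 * a ^ 3"
  proof -
    have "\<bar>r \<bullet> r\<bar> \<le> norm r * (Lt / 2 * a ^ 3)"
      using taylor_bound[OF n d2 d3 Lip_t Lt0, of r xk sk]
      unfolding r_def G1_def G_def H_def TT_def a_def by simp
    hence "norm r * norm r \<le> norm r * (Lt / 2 * a ^ 3)"
      by (simp add: power2_norm_eq_inner[symmetric] power2_eq_square)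
    thus ?thesis
      by (cases "norm r = 0") (use Lt0 a0 in auto)
  qed
  define mg where "mg = model_grad g B T \<sigma> sk"
  have mgb: "norm mg \<le> \<theta> * a ^ 3"
    using amin unfolding approx_min_cond_def chi_m1_def mg_def g_def B_def T_def a_def by simp
  have decomp: "G1 = r + (G - g) + (H *v sk - B *v sk) + (1/2) *\<^sub>R (tsq TT sk - tsq T sk) + mg
      - (\<sigma> * a ^ 2) *\<^sub>R sk"
    unfolding r_def mg_def model_grad_def a_def by (simp add: algebra_simps)
  have sg: "norm (g - G) \<le> 1/4 * \<epsilon>"
    and sb: "\<forall>s. norm ((B - H) *v s) \<le> 1/4 * \<epsilon> powr (2/3) * norm s"
    and st: "\<forall>s. norm (tsq T s - tsq TT s) \<le> 1/2 * \<epsilon> powr (1/3) * norm s ^ 2"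
    using samp unfolding sampling_cond_def g_def B_def T_def G_def H_def TT_def by auto
  define u where "u = \<epsilon> powr (1/3)"
  have u0: "u \<ge> 0" unfolding u_def by simp
  have u3: "u ^ 3 = \<epsilon>" unfolding u_def using pos
    by (simp add: powr_realpow[symmetric] powr_powr)
  have u2: "\<epsilon> powr (2/3) = u ^ 2" unfolding u_def using pos
    by (simp add: powr_realpow[symmetric] powr_powr)
  have n1: "norm (G - g) \<le> 1/4 * u ^ 3" using sg u3 by (simp add: norm_minus_commute)
  have n2: "norm (H *v sk - B *v sk) \<le> 1/4 * u ^ 2 * a"
    using sb[rule_format, of sk] u2 unfolding a_def
    by (simp add: norm_minus_commute matrix_vector_mult_diff_rdistrib)
  have n3: "norm ((1/2) *\<^sub>R (tsq TT sk - tsq T sk)) \<le> 1/4 * u * a ^ 2"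
    using st[rule_format, of sk] unfolding a_def u_def
    by (simp add: norm_minus_commute)
  have n4: "norm ((\<sigma> * a ^ 2) *\<^sub>R sk) = \<sigma> * a ^ 3"
    using pos unfolding a_def by (simp add: power3_eq_cube power2_eq_square)
  have tri: "norm G1 \<le> norm r + norm (G - g) + norm (H *v sk - B *v sk)
      + norm ((1/2) *\<^sub>R (tsq TT sk - tsq T sk)) + norm mg + norm ((\<sigma> * a ^ 2) *\<^sub>R sk)"
    unfolding decomp by (intro order.trans[OF norm_triangle_ineq4] add_mono order.trans[OF norm_triangle_ineq] order_refl)
  have y1: "u ^ 2 * a \<le> (2 * u ^ 3 + a ^ 3) / 3"
  proof -
    have "0 \<le> (u - a) ^ 2 * (2 * u + a)" using u0 a0 by simp
    thus ?thesis by (simp add: power2_eq_square power3_eq_cube algebra_simps)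
  qed
  have y2: "u * a ^ 2 \<le> (u ^ 3 + 2 * a ^ 3) / 3"
  proof -
    have "0 \<le> (u - a) ^ 2 * (u + 2 * a)" using u0 a0 by simp
    thus ?thesis by (simp add: power2_eq_square power3_eq_cube algebra_simps)
  qed
  define \<kappa> where "\<kappa> = \<sigma> + Lt / 2 + \<theta> + 1/4"
  have kp: "\<kappa> > 0" unfolding \<kappa>_def using pos Lt0 by simp
  have main: "norm G1 - 1/2 * \<epsilon> \<le> \<kappa> * a ^ 3"
    using tri rb n1 n2 n3 n4 mgb y1 y2 u3 unfolding \<kappa>_def by (simp add: algebra_simps)
  have "\<kappa> powr (-1/3) * root 3 (norm G1 - 1/2 * \<epsilon>) \<le> \<kappa> powr (-1/3) * root 3 (\<kappa> * a ^ 3)"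
    using main kp by (intro mult_left_mono) auto
  also have "root 3 (\<kappa> * a ^ 3) = root 3 \<kappa> * a"
    using a0 by (simp add: real_root_mult real_root_pos2)
  also have "\<kappa> powr (-1/3) * (root 3 \<kappa> * a) = a"
    using kp by (simp add: root_powr_inverse powr_add[symmetric])
  finally show ?thesis unfolding \<kappa>_def G1_def a_def .
qed

end
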